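(* Let $G$ be a finite simple graph on the vertex set $V(G)=\{x_{11},\ldots,x_{n1}\}$. Let $m_1,\ldots,m_n\geq 2$ be integers and let $G_1,\ldots,G_n$ be connected finite simple graphs on the vertex sets $V(G_i)=\{x_{i1},\ldots,x_{im_i}\}$, where the sets $V(G_i)\setminus\{x_{i1}\}$ are pairwise disjoint and disjoint from $V(G)$. Let $G(G_1,\ldots,G_n)$ denote the graph obtained by attaching $G_i$ to $G$ at the vertex $x_{i1}$ for every $i$. Then: (i) If $G_1,\ldots,G_n$ are vertex decomposable and, for each $i$, $x_{i1}$ is a shedding vertex of $G_i$, then $G(G_1,\ldots,G_n)$ is vertex decomposable. (ii) Conversely, if $G(G_1,\ldots,G_n)$ is vertex decomposable, then $G_1,\ldots,G_n$ are vertex decomposable.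
   Context: The graph $G(G_1,\ldots,G_n)$ has vertex set $\bigcup_{i=1}^n V(G_i)$ and edge set $E(G)\cup\bigcup_{i=1}^n E(G_i)$, i.e. the vertex $x_{i1}$ of $G$ is identified with the vertex $x_{i1}$ of $G_i$. For a graph $H$ and $W\subseteq V(H)$, $H\setminus W$ is the induced subgraph on $V(H)\setminus W$; $N_H(x)$ is the set of neighbors of $x$ and $N_H[x]=N_H(x)\cup\{x\}$. A graph $H$ is vertex decomposable if it has no edges, or else it has a vertex $x$ (called a shedding vertex) such that (1) both $H\setminus N_H[x]$ and $H\setminus\{x\}$ are vertex decomposable, and (2) for every independent set $S$ of $H\setminus N_H[x]$ there is $y\in N_H(x)$ such that $S\cup\{y\}$ is independent in $H\setminus\{x\}$. (Equivalently, the independence complex of $H$ is vertex decomposable in the sense of Björner–Wachs.) Note that by this definition a shedding vertex must satisfy both conditions (1) and (2). *)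

theory Defs
  imports Main
begin

type_synonym 'a graph = "'a set \<times> 'a set set"

definition verts :: "'a graph \<Rightarrow> 'a set" where "verts H = fst H"
definition edges :: "'a graph \<Rightarrow> 'a set set" where "edges H = snd H"

definition simple_graph :: "'a graph \<Rightarrow> bool" where
  "simple_graph H \<longleftrightarrow> finite (verts H) \<and> (\<forall>e\<in>edges H. e \<subseteq> verts H \<and> card e = 2)"

definition adj :: "'a graph \<Rightarrow> 'a \<Rightarrow> 'a \<Rightarrow> bool" where
  "adj H u v \<longleftrightarrow> {u, v} \<in> edges H"

definition connected_graph :: "'a graph \<Rightarrow> bool" where
  "connected_graph H \<longleftrightarrow> verts H \<noteq> {} \<and> (\<forall>u\<in>verts H. \<forall>v\<in>verts H. (adj H)\<^sup>*\<^sup>* u v)"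

definition del_verts :: "'a graph \<Rightarrow> 'a set \<Rightarrow> 'a graph" where
  "del_verts H W = (verts H - W, {e \<in> edges H. e \<subseteq> verts H - W})"

definition nbhd :: "'a graph \<Rightarrow> 'a \<Rightarrow> 'a set" where
  "nbhd H x = {y \<in> verts H. {x, y} \<in> edges H}"

definition closed_nbhd :: "'a graph \<Rightarrow> 'a \<Rightarrow> 'a set" where
  "closed_nbhd H x = insert x (nbhd H x)"

definition independent :: "'a graph \<Rightarrow> 'a set \<Rightarrow> bool" where
  "independent H S \<longleftrightarrow> S \<subseteq> verts H \<and> (\<forall>e\<in>edges H. \<not> e \<subseteq> S)"

definition shedding_cond :: "'a graph \<Rightarrow> 'a \<Rightarrow> bool" where
  "shedding_cond H x \<longleftrightarrow>
     (\<forall>S. independent (del_verts H (closed_nbhd H x)) S \<longrightarrow>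
          (\<exists>y\<in>nbhd H x. independent (del_verts H {x}) (insert y S)))"

inductive vertex_decomposable :: "'a graph \<Rightarrow> bool" where
  no_edges: "edges H = {} \<Longrightarrow> vertex_decomposable H"
| shed: "x \<in> verts H \<Longrightarrow> vertex_decomposable (del_verts H (closed_nbhd H x)) \<Longrightarrow>
         vertex_decomposable (del_verts H {x}) \<Longrightarrow> shedding_cond H x \<Longrightarrow>
         vertex_decomposable H"

definition shedding_vertex :: "'a graph \<Rightarrow> 'a \<Rightarrow> bool" where
  "shedding_vertex H x \<longleftrightarrow> x \<in> verts H \<and>
     vertex_decomposable (del_verts H (closed_nbhd H x)) \<and>
     vertex_decomposable (del_verts H {x}) \<and> shedding_cond H x"

definition attach :: "'a graph \<Rightarrow> nat \<Rightarrow> (nat \<Rightarrow> 'a graph) \<Rightarrow> 'a graph" where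
  "attach G n Gs = (verts G \<union> (\<Union>i\<in>{1..n}. verts (Gs i)),
                    edges G \<union> (\<Union>i\<in>{1..n}. edges (Gs i)))"

end

theory Submission
  imports Defs
begin


definition wfg :: "'a graph \<Rightarrow> bool" where
  "wfg H \<longleftrightarrow> (\<forall>e\<in>edges H. e \<subseteq> verts H \<and> card e = 2)"

lemma verts_del[simp]: "verts (del_verts H W) = verts H - W"
  by (simp add: del_verts_def verts_def)
lemma edges_del[simp]: "edges (del_verts H W) = {e \<in> edges H. e \<subseteq> verts H - W}"
  by (simp add: del_verts_def edges_def verts_def)

lemma del_del: "del_verts (del_verts H A) B = del_verts H (A \<union> B)"
  by (auto simp: del_verts_def verts_def edges_def)

lemma del_cong: "verts H - X = verts H - Y \<Longrightarrow> del_verts H X = del_verts H Y"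
  by (simp add: del_verts_def)

lemma wfg_del: "wfg H \<Longrightarrow> wfg (del_verts H W)"
  by (auto simp: wfg_def)

lemma del_empty: "wfg H \<Longrightarrow> del_verts H {} = H"
  by (rule prod_eqI) (auto simp: wfg_def del_verts_def verts_def edges_def)

lemma nbhd_del: "x \<in> verts H - A \<Longrightarrow> nbhd (del_verts H A) x = nbhd H x - A"
  by (auto simp: nbhd_def)

lemma closed_nbhd_del: "x \<in> verts H - A \<Longrightarrow> closed_nbhd (del_verts H A) x = closed_nbhd H x - A"
  by (auto simp: closed_nbhd_def nbhd_del)

lemma nbhd_sub: "nbhd H x \<subseteq> verts H" by (auto simp: nbhd_def)
lemma closed_nbhd_sub: "x \<in> verts H \<Longrightarrow> closed_nbhd H x \<subseteq> verts H"
  by (auto simp: nbhd_def closed_nbhd_def)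

lemma card2: "card e = 2 \<Longrightarrow> v \<in> e \<Longrightarrow> \<exists>z. z \<noteq> v \<and> e = {v, z}"
  by (auto simp: card_2_iff)

lemma independent_del: "independent (del_verts H W) S \<longleftrightarrow> S \<subseteq> verts H - W \<and> (\<forall>e\<in>edges H. \<not> e \<subseteq> S)"
  unfolding independent_def by auto

lemma nbhd_noloop: "wfg H \<Longrightarrow> y \<in> nbhd H x \<Longrightarrow> y \<noteq> x"
  by (auto simp: wfg_def nbhd_def)

lemma nbhd_sym: "y \<in> nbhd H x \<Longrightarrow> x \<in> verts H \<Longrightarrow> x \<in> nbhd H y"
  by (auto simp: nbhd_def insert_commute)

lemma link_vd:
  assumes "vertex_decomposable H" "wfg H" "v \<in> verts H"
  shows "vertex_decomposable (del_verts H (closed_nbhd H v))"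
  using assms
proof (induction arbitrary: v rule: vertex_decomposable.induct)
  case (no_edges H)
  then show ?case by (intro vertex_decomposable.no_edges) simp
next
  case (shed x H)
  let ?N = "closed_nbhd H"
  note IH1 = shed.IH(1) and IH2 = shed.IH(2)
  show ?case
  proof (cases "v = x")
    case True then show ?thesis using shed by simp
  next
    case vx: False
    show ?thesis
    proof (cases "v \<in> nbhd H x")
      case True
      have xv: "x \<in> ?N v" using True shed.hyps(1) by (auto simp: nbhd_def closed_nbhd_def insert_commute)
      have "vertex_decomposable (del_verts (del_verts H {x}) (closed_nbhd (del_verts H {x}) v))"
        using IH2[of v] shed.prems vx by (simp add: wfg_del)
      moreover have "del_verts (del_verts H {x}) (closed_nbhd (del_verts H {x}) v) = del_verts H (?N v)"
        using vx shed.prems xv by (simp add: del_del closed_nbhd_del insert_absorb)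
      ultimately show ?thesis by simp
    next
      case False
      define L where "L = del_verts H (?N v)"
      have vN: "v \<notin> ?N x" using False vx by (simp add: closed_nbhd_def)
      have xNv: "x \<notin> ?N v" using False vx shed.prems shed.hyps(1)
        by (auto simp: closed_nbhd_def nbhd_def insert_commute)
      have xL: "x \<in> verts L" using xNv shed.hyps(1) by (simp add: L_def)
      have e1: "del_verts L (closed_nbhd L x) = del_verts H (?N x \<union> ?N v)"
        using xNv shed.hyps(1) unfolding L_def
        by (simp add: del_del closed_nbhd_del) (rule del_cong, auto)
      have e2: "del_verts (del_verts H (?N x)) (closed_nbhd (del_verts H (?N x)) v) = del_verts H (?N x \<union> ?N v)"
        using vN shed.prems by (simp add: del_del closed_nbhd_del)
      have e3: "del_verts L {x} = del_verts H ({x} \<union> ?N v)"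
        unfolding L_def by (simp add: del_del Un_commute)
      have e4: "del_verts (del_verts H {x}) (closed_nbhd (del_verts H {x}) v) = del_verts H ({x} \<union> ?N v)"
        using vx shed.prems by (simp add: del_del closed_nbhd_del)
      have vd1: "vertex_decomposable (del_verts L (closed_nbhd L x))"
        using IH1[of v] e1 e2 vN shed.prems by (simp add: wfg_del)
      have vd2: "vertex_decomposable (del_verts L {x})"
        using IH2[of v] e3 e4 vx shed.prems by (simp add: wfg_del)
      have sc: "shedding_cond L x"
        unfolding shedding_cond_def
      proof (intro allI impI)
        fix S assume "independent (del_verts L (closed_nbhd L x)) S"
        hence S: "S \<subseteq> verts H - (?N x \<union> ?N v)" "\<forall>e\<in>edges H. \<not> e \<subseteq> S"
          using e1 by (simp_all add: independent_del)
        have "independent (del_verts H (?N x)) (insert v S)"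
          unfolding independent_del
        proof (intro conjI ballI)
          show "insert v S \<subseteq> verts H - ?N x" using S(1) vN shed.prems(2) by blast
        next
          fix e assume e: "e \<in> edges H"
          show "\<not> e \<subseteq> insert v S"
          proof
            assume es: "e \<subseteq> insert v S"
            show False
            proof (cases "v \<in> e")
              case True
              have "card e = 2" using e shed.prems(1) unfolding wfg_def by blast
              then obtain z where z: "z \<noteq> v" "e = {v, z}" using card2[OF _ True] by blast
              hence "z \<in> S" using es by auto
              moreover have "z \<in> ?N v" using z e shed.prems(1) unfolding wfg_def
                by (auto simp: closed_nbhd_def nbhd_def)
              ultimately show False using S by auto
            next
              case False
              hence "e \<subseteq> S" using es by blast
              then show False using S e by blast
            qed
          qed
        qed
        then obtain y where y: "y \<in> nbhd H x" "independent (del_verts H {x}) (insert y (insert v S))"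
          using shed.hyps(4) unfolding shedding_cond_def by blast
        have yv: "y \<noteq> v" using y False by auto
        have yNv: "y \<notin> ?N v"
        proof
          assume "y \<in> ?N v"
          hence "{v, y} \<in> edges H" using yv by (auto simp: closed_nbhd_def nbhd_def)
          thus False using y(2) by (auto simp: independent_del)
        qed
        have "y \<in> nbhd L x" unfolding L_def using xNv shed.hyps(1) y yNv by (simp add: nbhd_del)
        moreover have "independent (del_verts L {x}) (insert y S)"
          using y(2) S yNv unfolding e3 independent_del by (auto simp: closed_nbhd_def)
        ultimately show "\<exists>y\<in>nbhd L x. independent (del_verts L {x}) (insert y S)" by blast
      qed
      show ?thesis using vertex_decomposable.shed[OF xL vd1 vd2 sc] L_def by simp
    qed
  qed
qed


definition gunion :: "'a graph \<Rightarrow> 'a graph \<Rightarrow> 'a graph" where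
  "gunion A B = (verts A \<union> verts B, edges A \<union> edges B)"

lemma verts_gunion[simp]: "verts (gunion A B) = verts A \<union> verts B"
  by (simp add: gunion_def verts_def)
lemma edges_gunion[simp]: "edges (gunion A B) = edges A \<union> edges B"
  by (simp add: gunion_def edges_def)
lemma gunion_comm: "gunion A B = gunion B A"
  by (simp add: gunion_def Un_commute)

lemma del_gunion: "wfg A \<Longrightarrow> wfg B \<Longrightarrow> del_verts (gunion A B) W = gunion (del_verts A W) (del_verts B W)"
  unfolding gunion_def del_verts_def wfg_def verts_def edges_def by auto

lemma del_disj: "wfg B \<Longrightarrow> W \<inter> verts B = {} \<Longrightarrow> del_verts B W = B"
  by (rule prod_eqI) (auto simp: wfg_def del_verts_def verts_def edges_def)

lemma nbhd_gunion: "wfg A \<Longrightarrow> wfg B \<Longrightarrow> verts A \<inter> verts B = {} \<Longrightarrow> x \<in> verts A \<Longrightarrow> nbhd (gunion A B) x = nbhd A x"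
  unfolding nbhd_def wfg_def by (auto; metis IntI empty_iff insert_subset)

lemma shed_step:
  assumes wA: "wfg A" and wB: "wfg B" and dj: "verts A \<inter> verts B = {}" and x: "x \<in> verts A"
    and sc: "shedding_cond A x"
    and v1: "vertex_decomposable (gunion (del_verts A (closed_nbhd A x)) B)"
    and v2: "vertex_decomposable (gunion (del_verts A {x}) B)"
  shows "vertex_decomposable (gunion A B)"
proof -
  have cn: "closed_nbhd (gunion A B) x = closed_nbhd A x"
    using nbhd_gunion[OF wA wB dj x] by (simp add: closed_nbhd_def)
  have sub: "closed_nbhd A x \<subseteq> verts A" by (rule closed_nbhd_sub[OF x])
  have d1: "del_verts (gunion A B) (closed_nbhd A x) = gunion (del_verts A (closed_nbhd A x)) B"
    proof -
    have "closed_nbhd A x \<inter> verts B = {}" using sub dj by blast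
    then show ?thesis by (simp add: del_gunion[OF wA wB] del_disj[OF wB])
  qed
  have d2: "del_verts (gunion A B) {x} = gunion (del_verts A {x}) B"
    proof -
    have "{x} \<inter> verts B = {}" using x dj by blast
    then show ?thesis by (simp add: del_gunion[OF wA wB] del_disj[OF wB])
  qed
  have sc2: "shedding_cond (gunion A B) x"
    unfolding shedding_cond_def
  proof (intro allI impI)
    fix S assume "independent (del_verts (gunion A B) (closed_nbhd (gunion A B) x)) S"
    hence S: "S \<subseteq> verts A \<union> verts B - closed_nbhd A x" "\<forall>e\<in>edges A \<union> edges B. \<not> e \<subseteq> S"
      by (simp_all add: independent_del cn)
    have "independent (del_verts A (closed_nbhd A x)) (S \<inter> verts A)"
      unfolding independent_del using S by blast
    then obtain y where y: "y \<in> nbhd A x" "independent (del_verts A {x}) (insert y (S \<inter> verts A))"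
      using sc unfolding shedding_cond_def by blast
    have yA: "y \<in> verts A - {x}" using y(2) by (simp add: independent_del)
    have "independent (del_verts (gunion A B) {x}) (insert y S)"
      unfolding independent_del
    proof (intro conjI ballI)
      have "x \<in> closed_nbhd A x" by (simp add: closed_nbhd_def)
      then show "insert y S \<subseteq> verts (gunion A B) - {x}" using yA S(1) by auto
    next
      fix e assume e: "e \<in> edges (gunion A B)"
      show "\<not> e \<subseteq> insert y S"
      proof
        assume es: "e \<subseteq> insert y S"
        show False
        proof (cases "e \<in> edges A")
          case True
          hence "e \<subseteq> verts A" using wA unfolding wfg_def by blast
          hence "e \<subseteq> insert y (S \<inter> verts A)" using es by blast
          then show False using y(2) True by (simp add: independent_del)
        next
          case False
          hence eB: "e \<in> edges B" using e by simp
          hence "e \<subseteq> verts B" using wB unfolding wfg_def by blast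
          hence "y \<notin> e" using yA dj by blast
          hence "e \<subseteq> S" using es by blast
          then show False using S(2) eB by blast
        qed
      qed
    qed
    thus "\<exists>y\<in>nbhd (gunion A B) x. independent (del_verts (gunion A B) {x}) (insert y S)"
      unfolding nbhd_gunion[OF wA wB dj x] using y(1) by blast
  qed
  show ?thesis
  proof (rule vertex_decomposable.shed[of x])
    show "x \<in> verts (gunion A B)" using x by simp
    show "vertex_decomposable (del_verts (gunion A B) (closed_nbhd (gunion A B) x))"
      unfolding cn d1 by (rule v1)
    show "vertex_decomposable (del_verts (gunion A B) {x})" unfolding d2 by (rule v2)
  qed fact
qed

lemma vd_union0:
  assumes "vertex_decomposable B" "wfg A" "wfg B" "edges A = {}" "verts A \<inter> verts B = {}"
  shows "vertex_decomposable (gunion A B)"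
  using assms
proof (induction B rule: vertex_decomposable.induct)
  case (no_edges B) then show ?case by (intro vertex_decomposable.no_edges) simp
next
  case (shed x B)
  have "vertex_decomposable (gunion B A)"
  proof (rule shed_step)
    show "vertex_decomposable (gunion (del_verts B (closed_nbhd B x)) A)"
      using shed.IH(1) shed.prems by (auto simp: wfg_del gunion_comm)
    show "vertex_decomposable (gunion (del_verts B {x}) A)"
      using shed.IH(2) shed.prems by (auto simp: wfg_del gunion_comm)
  qed (insert shed.hyps(1,4) shed.prems, simp_all add: Int_commute)
  then show ?case by (simp add: gunion_comm)
qed

lemma vd_union:
  assumes "vertex_decomposable A" "vertex_decomposable B" "wfg A" "wfg B" "verts A \<inter> verts B = {}"
  shows "vertex_decomposable (gunion A B)"
  using assms
proof (induction A rule: vertex_decomposable.induct)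
  case (no_edges A) then show ?case using vd_union0 by blast
next
  case (shed x A)
  show ?case
  proof (rule shed_step)
    show "vertex_decomposable (gunion (del_verts A (closed_nbhd A x)) B)"
      using shed.IH(1) shed.prems by (auto simp: wfg_del)
    show "vertex_decomposable (gunion (del_verts A {x}) B)"
      using shed.IH(2) shed.prems by (auto simp: wfg_del)
  qed (insert shed.hyps(1,4) shed.prems, simp_all)
qed

lemma phase2:
  "finite R \<Longrightarrow> wfg L \<Longrightarrow> vertex_decomposable L \<Longrightarrow> R \<subseteq> verts L \<Longrightarrow> (\<forall>r\<in>R. nbhd L r \<subseteq> R)
   \<Longrightarrow> vertex_decomposable (del_verts L R)"
proof (induction "card R" arbitrary: L R rule: less_induct)
  case less
  show ?case
  proof (cases "R = {}")
    case True then show ?thesis using less.prems(2,3) by (simp add: del_empty)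
  next
    case False then obtain r where r: "r \<in> R" by blast
    let ?N = "closed_nbhd L r"
    define L' where "L' = del_verts L ?N"
    define R' where "R' = R - ?N"
    have "nbhd L r \<subseteq> R" using r less.prems(5) by blast
    hence NR: "?N \<subseteq> R" using r unfolding closed_nbhd_def by blast
    have rL: "r \<in> verts L" using r less.prems(4) by blast
    have vd: "vertex_decomposable L'" unfolding L'_def by (rule link_vd[OF less.prems(3,2) rL])
    have eq: "del_verts L R = del_verts L' R'"
      unfolding L'_def R'_def del_del using NR by (simp add: Un_absorb1 Un_Diff_cancel)
    have rN: "r \<in> ?N" by (simp add: closed_nbhd_def)
    have "card R' < card R" unfolding R'_def using less.prems(1) r rN
      by (intro psubset_card_mono) auto
    moreover have "R' \<subseteq> verts L'" using less.prems(4) unfolding R'_def L'_def by auto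
    moreover have "\<forall>r'\<in>R'. nbhd L' r' \<subseteq> R'"
    proof
      fix r' assume r': "r' \<in> R'"
      hence "r' \<in> verts L - ?N" using less.prems(4) unfolding R'_def by auto
      hence "nbhd L' r' = nbhd L r' - ?N" unfolding L'_def by (rule nbhd_del)
      thus "nbhd L' r' \<subseteq> R'" using less.prems(5) r' unfolding R'_def by auto
    qed
    ultimately have "vertex_decomposable (del_verts L' R')"
      using less.hyps[of R' L'] less.prems(1,2) vd unfolding R'_def L'_def by (auto simp: wfg_del)
    then show ?thesis using eq by simp
  qed
qed

lemma phase1:
  "finite J \<Longrightarrow> wfg H \<Longrightarrow> vertex_decomposable H \<Longrightarrow> (\<forall>j\<in>J. s j \<in> verts H)
   \<Longrightarrow> (\<forall>j\<in>J. \<forall>k\<in>J. j \<noteq> k \<longrightarrow> s j \<notin> closed_nbhd H (s k))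
   \<Longrightarrow> vertex_decomposable (del_verts H (\<Union>j\<in>J. closed_nbhd H (s j)))"
proof (induction J rule: finite_induct)
  case empty then show ?case by (simp add: del_empty)
next
  case (insert j J)
  let ?W = "\<Union>k\<in>J. closed_nbhd H (s k)"
  have IH: "vertex_decomposable (del_verts H ?W)" using insert by auto
  have sj: "s j \<in> verts H - ?W" using insert by auto
  have "vertex_decomposable (del_verts (del_verts H ?W) (closed_nbhd (del_verts H ?W) (s j)))"
    using link_vd[OF IH] sj insert.prems(1) by (simp add: wfg_del)
  moreover have "del_verts (del_verts H ?W) (closed_nbhd (del_verts H ?W) (s j))
     = del_verts H (\<Union>k\<in>insert j J. closed_nbhd H (s k))"
    using sj by (simp add: del_del closed_nbhd_del) (rule del_cong, auto)
  ultimately show ?case by simp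
qed



definition ind :: "'a graph \<Rightarrow> 'a set \<Rightarrow> 'a graph" where
  "ind H U = del_verts H (verts H - U)"

definition sep :: "'a graph \<Rightarrow> 'a set \<Rightarrow> 'a set \<Rightarrow> bool" where
  "sep H X Y \<longleftrightarrow> (\<forall>z\<in>X. z \<notin> Y) \<and> (\<forall>e\<in>edges H. \<forall>a\<in>e. \<forall>b\<in>e. a \<in> X \<longrightarrow> b \<notin> Y)"

lemma sep_sym: "sep H X Y \<Longrightarrow> sep H Y X"
  unfolding sep_def by blast

lemma sep_mono: "sep H X Y \<Longrightarrow> X' \<subseteq> X \<Longrightarrow> Y' \<subseteq> Y \<Longrightarrow> sep H X' Y'"
  unfolding sep_def by blast

lemma sep_Un: "sep H X Z \<Longrightarrow> sep H Y Z \<Longrightarrow> sep H (X \<union> Y) Z"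
  unfolding sep_def by (metis Un_iff)

lemma sep_UN: "(\<And>k. k \<in> K \<Longrightarrow> sep H (F k) Z) \<Longrightarrow> sep H (\<Union>k\<in>K. F k) Z"
  unfolding sep_def by blast

lemma sep_UN2: "(\<And>k. k \<in> K \<Longrightarrow> sep H Z (F k)) \<Longrightarrow> sep H Z (\<Union>k\<in>K. F k)"
  unfolding sep_def by blast

lemma verts_ind: "U \<subseteq> verts H \<Longrightarrow> verts (ind H U) = U"
  unfolding ind_def by auto

lemma wfg_ind: "wfg H \<Longrightarrow> wfg (ind H U)"
  unfolding ind_def by (rule wfg_del)

lemma del_ind: "del_verts (ind H U) W = ind H (U - W)"
  unfolding ind_def del_del by (rule del_cong) auto

lemma indep_ind: "U \<subseteq> verts H \<Longrightarrow> independent (ind H U) S \<longleftrightarrow> S \<subseteq> U \<and> (\<forall>e\<in>edges H. \<not> e \<subseteq> S)"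
  unfolding ind_def independent_del by auto

lemma nbhd_ind: "U \<subseteq> verts H \<Longrightarrow> v \<in> U \<Longrightarrow> nbhd (ind H U) v = nbhd H v \<inter> U"
  unfolding ind_def by (subst nbhd_del) (auto simp: nbhd_def)

lemma cnbhd_ind: "U \<subseteq> verts H \<Longrightarrow> v \<in> U \<Longrightarrow> closed_nbhd (ind H U) v = closed_nbhd H v \<inter> U"
  unfolding closed_nbhd_def by (auto simp: nbhd_ind)

lemma ind_full: "wfg H \<Longrightarrow> ind H (verts H) = H"
  unfolding ind_def by (simp add: del_empty)

lemma ind_empty_vd: "wfg H \<Longrightarrow> vertex_decomposable (ind H {})"
proof (rule vertex_decomposable.no_edges)
  assume w: "wfg H"
  show "edges (ind H {}) = {}"
  proof (rule ccontr)
    assume "edges (ind H {}) \<noteq> {}"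
    then obtain e where "e \<in> edges H" "e \<subseteq> {}" unfolding ind_def by auto
    moreover have "card e = 2" using w \<open>e \<in> edges H\<close> unfolding wfg_def by blast
    ultimately show False by simp
  qed
qed

lemma edges_ind: "U \<subseteq> verts H \<Longrightarrow> edges (ind H U) = {e \<in> edges H. e \<subseteq> U}"
  unfolding ind_def by auto

lemma ind_union:
  assumes w: "wfg H" and X: "X \<subseteq> verts H" and Y: "Y \<subseteq> verts H" and s: "sep H X Y"
  shows "ind H (X \<union> Y) = gunion (ind H X) (ind H Y)"
proof -
  have XY: "X \<union> Y \<subseteq> verts H" using X Y by blast
  have v: "verts (ind H (X \<union> Y)) = verts (gunion (ind H X) (ind H Y))"
    using X Y XY by (simp add: verts_ind)
  have "{e \<in> edges H. e \<subseteq> X \<union> Y} = {e \<in> edges H. e \<subseteq> X} \<union> {e \<in> edges H. e \<subseteq> Y}"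
  proof (intro equalityI subsetI)
    fix e assume e: "e \<in> {e \<in> edges H. e \<subseteq> X \<union> Y}"
    show "e \<in> {e \<in> edges H. e \<subseteq> X} \<union> {e \<in> edges H. e \<subseteq> Y}"
    proof (cases "\<exists>a\<in>e. a \<in> X")
      case False then show ?thesis using e by blast
    next
      case True
      hence "\<forall>b\<in>e. b \<notin> Y" using s e unfolding sep_def by blast
      then show ?thesis using e by blast
    qed
  qed blast
  hence e: "edges (ind H (X \<union> Y)) = edges (gunion (ind H X) (ind H Y))"
    using X Y XY by (simp add: edges_ind)
  show ?thesis using v e by (simp add: verts_def edges_def prod_eq_iff)
qed

lemma vd_ind_union:
  assumes w: "wfg H" and X: "X \<subseteq> verts H" and Y: "Y \<subseteq> verts H" and s: "sep H X Y"
    and v1: "vertex_decomposable (ind H X)" and v2: "vertex_decomposable (ind H Y)"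
  shows "vertex_decomposable (ind H (X \<union> Y))"
proof -
  have "verts (ind H X) \<inter> verts (ind H Y) = {}" using s X Y unfolding sep_def by (auto simp: verts_ind)
  then show ?thesis unfolding ind_union[OF w X Y s]
    using vd_union[OF v1 v2 wfg_ind[OF w] wfg_ind[OF w]] by blast
qed

lemma vd_ind_family:
  "finite K \<Longrightarrow> wfg H \<Longrightarrow> J \<subseteq> verts H \<Longrightarrow> (\<forall>k\<in>K. Q k \<subseteq> verts H) \<Longrightarrow> vertex_decomposable (ind H J)
   \<Longrightarrow> (\<forall>k\<in>K. vertex_decomposable (ind H (Q k))) \<Longrightarrow> (\<forall>k\<in>K. sep H J (Q k))
   \<Longrightarrow> (\<forall>k\<in>K. \<forall>k'\<in>K. k \<noteq> k' \<longrightarrow> sep H (Q k) (Q k'))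
   \<Longrightarrow> vertex_decomposable (ind H (J \<union> (\<Union>k\<in>K. Q k)))"
proof (induction K rule: finite_induct)
  case empty then show ?case by simp
next
  case (insert k K)
  have IH: "vertex_decomposable (ind H (J \<union> (\<Union>k\<in>K. Q k)))"
    by (rule insert.IH) (use insert.prems in simp_all)
  have s: "sep H (J \<union> (\<Union>k\<in>K. Q k)) (Q k)"
  proof (rule sep_Un)
    show "sep H J (Q k)" using insert.prems(6) by simp
    show "sep H (\<Union>k\<in>K. Q k) (Q k)"
    proof (rule sep_UN)
      fix k' assume "k' \<in> K"
      moreover have "k' \<noteq> k" using \<open>k' \<in> K\<close> insert.hyps(2) by blast
      ultimately show "sep H (Q k') (Q k)" using insert.prems(7) by simp
    qed
  qed
  have sub1: "J \<union> (\<Union>k\<in>K. Q k) \<subseteq> verts H" using insert.prems(2,3) by blast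
  have sub2: "Q k \<subseteq> verts H" using insert.prems(3) by blast
  have vk: "vertex_decomposable (ind H (Q k))" using insert.prems(5) by blast
  have eq: "(J \<union> (\<Union>k\<in>K. Q k)) \<union> Q k = J \<union> (\<Union>k\<in>insert k K. Q k)" by blast
  show ?case unfolding eq[symmetric]
    by (rule vd_ind_union[OF insert.prems(1) sub1 sub2 s IH vk])
qed



locale att =
  fixes G :: "'a graph" and Gs :: "nat \<Rightarrow> 'a graph" and n :: nat and m :: "nat \<Rightarrow> nat" and x :: "nat \<Rightarrow> nat \<Rightarrow> 'a"
  assumes G_simple: "simple_graph G"
    and G_verts: "verts G = (\<lambda>i. x i 1) ` {1..n}"
    and G_verts_distinct: "inj_on (\<lambda>i. x i 1) {1..n}"
    and m_ge: "\<forall>i\<in>{1..n}. m i \<ge> 2"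
    and Gi_simple: "\<forall>i\<in>{1..n}. simple_graph (Gs i)"
    and Gi_conn: "\<forall>i\<in>{1..n}. connected_graph (Gs i)"
    and Gi_verts: "\<forall>i\<in>{1..n}. verts (Gs i) = x i ` {1..m i}"
    and Gi_verts_distinct: "\<forall>i\<in>{1..n}. inj_on (x i) {1..m i}"
    and Gi_disj: "\<forall>i\<in>{1..n}. \<forall>j\<in>{1..n}. i \<noteq> j \<longrightarrow>
                    (verts (Gs i) - {x i 1}) \<inter> (verts (Gs j) - {x j 1}) = {}"
    and Gi_disj_G: "\<forall>i\<in>{1..n}. (verts (Gs i) - {x i 1}) \<inter> verts G = {}"
begin

abbreviation "H \<equiv> attach G n Gs"

lemma VH: "verts H = verts G \<union> (\<Union>i\<in>{1..n}. verts (Gs i))"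
  by (simp add: attach_def verts_def)
lemma EH: "edges H = edges G \<union> (\<Union>i\<in>{1..n}. edges (Gs i))"
  by (simp add: attach_def edges_def)

lemma Esub: "i \<in> {1..n} \<Longrightarrow> e \<in> edges (Gs i) \<Longrightarrow> e \<subseteq> verts (Gs i)"
  using Gi_simple unfolding simple_graph_def by blast
lemma Ecard: "i \<in> {1..n} \<Longrightarrow> e \<in> edges (Gs i) \<Longrightarrow> card e = 2"
  using Gi_simple unfolding simple_graph_def by blast
lemma EsubH: "i \<in> {1..n} \<Longrightarrow> edges (Gs i) \<subseteq> edges H"
  unfolding EH by blast
lemma Vsub: "i \<in> {1..n} \<Longrightarrow> verts (Gs i) \<subseteq> verts H"
  unfolding VH by blast

lemma wfH: "wfg H"
proof -
  have "e \<subseteq> verts H \<and> card e = 2" if "e \<in> edges H" for e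
  proof -
    from that consider "e \<in> edges G" | i where "i\<in>{1..n}" "e \<in> edges (Gs i)" unfolding EH by blast
    then show ?thesis
    proof cases
      case 1 then show ?thesis using G_simple unfolding simple_graph_def VH by blast
    next
      case 2 then show ?thesis using Esub[OF 2] Ecard[OF 2] Vsub[OF 2(1)] by blast
    qed
  qed
  thus ?thesis unfolding wfg_def by blast
qed

lemma finH: "finite (verts H)"
proof -
  have "finite (verts G)" using G_simple unfolding simple_graph_def by blast
  moreover have "finite (verts (Gs i))" if "i \<in> {1..n}" for i
    using Gi_simple that unfolding simple_graph_def by blast
  ultimately show ?thesis unfolding VH by auto
qed

lemma x1V: "i \<in> {1..n} \<Longrightarrow> x i 1 \<in> verts (Gs i)"
  using Gi_verts m_ge by force
lemma x1G: "i \<in> {1..n} \<Longrightarrow> x i 1 \<in> verts G"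
  using G_verts by blast

lemma disjV:
  assumes i: "i \<in> {1..n}" and j: "j \<in> {1..n}" and ij: "i \<noteq> j"
    and zi: "z \<in> verts (Gs i)" and zj: "z \<in> verts (Gs j)"
  shows False
proof (cases "z = x i 1")
  case True
  hence zG: "z \<in> verts G" using x1G[OF i] by simp
  show False
  proof (cases "z = x j 1")
    case True
    hence "x i 1 = x j 1" using \<open>z = x i 1\<close> by simp
    hence "i = j" using G_verts_distinct i j unfolding inj_on_def by blast
    then show False using ij by simp
  next
    case False
    then show False using Gi_disj_G j zj zG by blast
  qed
next
  case False
  show False
  proof (cases "z = x j 1")
    case True
    hence zG: "z \<in> verts G" using x1G[OF j] by simp
    then show False using Gi_disj_G i zi False by blast
  next
    case False2: False
    then show False using Gi_disj i j ij zi zj False by blast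
  qed
qed

lemma edge_in:
  assumes i: "i \<in> {1..n}" and z: "z \<in> verts (Gs i)" "z \<noteq> x i 1" and e: "e \<in> edges H" "z \<in> e"
  shows "e \<in> edges (Gs i)"
proof -
  from e(1) consider "e \<in> edges G" | k where "k\<in>{1..n}" "e \<in> edges (Gs k)" unfolding EH by blast
  then show ?thesis
  proof cases
    case 1
    hence "z \<in> verts G" using G_simple e(2) unfolding simple_graph_def by blast
    then show ?thesis using Gi_disj_G i z by blast
  next
    case 2
    hence "z \<in> verts (Gs k)" using Esub e(2) by blast
    then have "k = i" using disjV[OF i 2(1) _ z(1)] by blast
    then show ?thesis using 2 by simp
  qed
qed

lemma GsI: assumes i: "i \<in> {1..n}" shows "Gs i = ind H (verts (Gs i))"
proof -
  have v: "verts (ind H (verts (Gs i))) = verts (Gs i)" by (rule verts_ind[OF Vsub[OF i]])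
  have "{e \<in> edges H. e \<subseteq> verts (Gs i)} = edges (Gs i)"
  proof (intro equalityI subsetI)
    fix e assume e: "e \<in> {e \<in> edges H. e \<subseteq> verts (Gs i)}"
    have "card e = 2" using wfH e unfolding wfg_def by blast
    then obtain a b where ab: "e = {a, b}" "a \<noteq> b" by (auto simp: card_2_iff)
    then obtain z where z: "z \<in> e" "z \<noteq> x i 1" by blast
    show "e \<in> edges (Gs i)" using edge_in[OF i _ z(2) _ z(1)] e z(1) by blast
  next
    fix e assume "e \<in> edges (Gs i)"
    then show "e \<in> {e \<in> edges H. e \<subseteq> verts (Gs i)}" using EsubH[OF i] Esub[OF i] by blast
  qed
  hence e: "edges (ind H (verts (Gs i))) = edges (Gs i)" by (simp add: edges_ind[OF Vsub[OF i]])
  show ?thesis using v e by (simp add: verts_def edges_def prod_eq_iff)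
qed

lemma sepP:
  assumes i: "i \<in> {1..n}" and j: "j \<in> {1..n}" and ij: "i \<noteq> j"
  shows "sep H (verts (Gs i) - {x i 1}) (verts (Gs j))"
  unfolding sep_def
proof (intro conjI ballI impI)
  fix z assume "z \<in> verts (Gs i) - {x i 1}"
  then show "z \<notin> verts (Gs j)" using disjV[OF i j ij] by blast
next
  fix e a b assume e: "e \<in> edges H" and a: "a \<in> e" and b: "b \<in> e" and ai: "a \<in> verts (Gs i) - {x i 1}"
  have "e \<in> edges (Gs i)" using edge_in[OF i _ _ e a] ai by blast
  hence "b \<in> verts (Gs i)" using Esub[OF i] b by blast
  then show "b \<notin> verts (Gs j)" using disjV[OF i j ij] by blast
qed

lemma NV:
  assumes a: "a \<in> {1..n}" and j: "j \<in> {1..n}" and aj: "a \<noteq> j"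
    and z: "z \<in> verts (Gs a)" "z \<noteq> x a 1"
  shows "z \<notin> closed_nbhd H (x j 1)"
proof
  assume zN: "z \<in> closed_nbhd H (x j 1)"
  have xj: "x j 1 \<in> verts (Gs j)" by (rule x1V[OF j])
  show False
  proof (cases "z = x j 1")
    case True then show False using disjV[OF a j aj z(1)] xj by simp
  next
    case False
    hence "{x j 1, z} \<in> edges H" using zN unfolding closed_nbhd_def nbhd_def by blast
    hence "{x j 1, z} \<in> edges (Gs a)" using edge_in[OF a z] by blast
    hence "x j 1 \<in> verts (Gs a)" using Esub[OF a] by blast
    then show False using disjV[OF a j aj] xj by blast
  qed
qed

end


context att begin

definition P :: "nat set \<Rightarrow> 'a set" where "P A = (\<Union>k\<in>A. verts (Gs k))"

lemma P_sub: "A \<subseteq> {1..n} \<Longrightarrow> P A \<subseteq> verts H"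
  unfolding P_def using Vsub by blast

lemma part1_claim:
  assumes sv: "\<forall>i\<in>{1..n}. shedding_vertex (Gs i) (x i 1)"
  shows "A \<subseteq> {1..n} \<Longrightarrow> J \<subseteq> verts H \<Longrightarrow> sep H J (P A) \<Longrightarrow> vertex_decomposable (ind H J)
         \<Longrightarrow> vertex_decomposable (ind H (P A \<union> J))"
proof (induction "card A" arbitrary: A J rule: less_induct)
  case less
  note A = less.prems(1) and JH = less.prems(2) and sJ = less.prems(3) and vJ = less.prems(4)
  show ?case
  proof (cases "A = {}")
    case True then show ?thesis using vJ by (simp add: P_def)
  next
    case False
    then obtain j where jA: "j \<in> A" by blast
    have jI: "j \<in> {1..n}" using A jA by blast
    have finA: "finite A" using A finite_subset by blast
    define v where "v = x j 1"
    define Gj where "Gj = verts (Gs j)"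
    define A0 where "A0 = A - {j}"
    define N where "N = closed_nbhd H v"
    have A0I: "A0 \<subseteq> {1..n}" using A unfolding A0_def by blast
    have PA: "P A = Gj \<union> P A0" using jA unfolding P_def A0_def Gj_def by blast
    have vGj: "v \<in> Gj" using x1V[OF jI] unfolding v_def Gj_def .
    have GjH: "Gj \<subseteq> verts H" using Vsub[OF jI] unfolding Gj_def .
    have PH: "P A \<subseteq> verts H" by (rule P_sub[OF A])
    define U where "U = P A \<union> J"
    have UH: "U \<subseteq> verts H" using PH JH unfolding U_def by blast
    have vU: "v \<in> U" using vGj PA unfolding U_def by blast
    have vJ': "v \<notin> J" using sJ vGj PA unfolding sep_def by blast
    have vP0: "v \<notin> P A0"
    proof
      assume "v \<in> P A0"
      then obtain k where k: "k \<in> A0" "v \<in> verts (Gs k)" unfolding P_def by blast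
      have "k \<in> {1..n}" "k \<noteq> j" using k(1) A0I unfolding A0_def by blast+
      then show False using disjV[OF jI _ _ _ k(2)] vGj unfolding Gj_def by blast
    qed
    have vN: "v \<in> N" unfolding N_def closed_nbhd_def by simp
    have NJ: "N \<inter> J = {}"
    proof (rule ccontr)
      assume "N \<inter> J \<noteq> {}"
      then obtain z where z: "z \<in> N" "z \<in> J" by blast
      hence "z \<noteq> v" using vJ' by blast
      hence "{v, z} \<in> edges H" using z(1) unfolding N_def closed_nbhd_def nbhd_def by blast
      moreover have "v \<in> P A" using vGj PA by blast
      ultimately show False using sJ z(2) unfolding sep_def by blast
    qed
    have GsJ: "Gs j = ind H Gj" unfolding Gj_def by (rule GsI[OF jI])
    have "shedding_vertex (Gs j) v" using sv jI unfolding v_def by blast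
    hence svj: "shedding_vertex (ind H Gj) v" unfolding GsJ .
    have DJ1: "del_verts (ind H Gj) (closed_nbhd (ind H Gj) v) = ind H (Gj - N)"
      unfolding del_ind cnbhd_ind[OF GjH vGj] N_def by (rule arg_cong[where f="ind H"]) blast
    have DJ2: "del_verts (ind H Gj) {v} = ind H (Gj - {v})" by (rule del_ind)
    have vdN: "vertex_decomposable (ind H (Gj - N))" using svj DJ1 unfolding shedding_vertex_def by simp
    have vdx: "vertex_decomposable (ind H (Gj - {v}))" using svj DJ2 unfolding shedding_vertex_def by simp
    have scj: "shedding_cond (ind H Gj) v" using svj unfolding shedding_vertex_def by simp
    have sPJ: "sep H (P A) J" by (rule sep_sym[OF sJ])
    have Ueq1: "U - {v} = P A0 \<union> ((Gj - {v}) \<union> J)" using PA vJ' vP0 unfolding U_def by blast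
    have J1H: "(Gj - {v}) \<union> J \<subseteq> verts H" using GjH JH by blast
    have sGjJ: "sep H (Gj - {v}) J" by (rule sep_mono[OF sPJ]) (use PA in blast)+
    have vdJ1: "vertex_decomposable (ind H ((Gj - {v}) \<union> J))"
      by (rule vd_ind_union[OF wfH _ JH sGjJ vdx vJ]) (use GjH in blast)
    have sGP: "sep H (Gj - {v}) (P B)" if B: "B \<subseteq> A0" for B
      unfolding P_def
    proof (rule sep_UN2)
      fix k assume "k \<in> B"
      hence k: "k \<in> {1..n}" "k \<noteq> j" using B A0I unfolding A0_def by blast+
      show "sep H (Gj - {v}) (verts (Gs k))" using sepP[OF jI k(1)] k(2) unfolding Gj_def v_def by metis
    qed
    have sJ1: "sep H ((Gj - {v}) \<union> J) (P A0)"
    proof (rule sep_Un)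
      show "sep H (Gj - {v}) (P A0)" by (rule sGP) simp
      show "sep H J (P A0)" by (rule sep_mono[OF sJ]) (use PA in blast)+
    qed
    have cardA0: "card A0 < card A" unfolding A0_def by (rule card_Diff1_less[OF finA jA])
    have vd_a: "vertex_decomposable (ind H (U - {v}))"
      unfolding Ueq1 by (rule less.hyps[OF cardA0 A0I J1H sJ1 vdJ1])
    define K where "K = {k \<in> A0. x k 1 \<in> nbhd H v}"
    define A1 where "A1 = A0 - K"
    define Q where "Q = (\<lambda>k. verts (Gs k) - {x k 1})"
    define J0 where "J0 = (Gj - N) \<union> J"
    define J2 where "J2 = J0 \<union> (\<Union>k\<in>K. Q k)"
    have KA0: "K \<subseteq> A0" unfolding K_def by blast
    have KI: "K \<subseteq> {1..n}" using KA0 A0I by blast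
    have A1I: "A1 \<subseteq> {1..n}" using A0I unfolding A1_def by blast
    have finK: "finite K" using KI finite_subset by blast
    have P0eq: "P A0 - N = P A1 \<union> (\<Union>k\<in>K. Q k)"
    proof (intro equalityI subsetI)
      fix z assume "z \<in> P A0 - N"
      then obtain a where a: "a \<in> A0" "z \<in> verts (Gs a)" "z \<notin> N" unfolding P_def by blast
      show "z \<in> P A1 \<union> (\<Union>k\<in>K. Q k)"
      proof (cases "a \<in> K")
        case True
        then have "x a 1 \<in> nbhd H v" unfolding K_def by blast
        hence "z \<noteq> x a 1" using a(3) unfolding N_def closed_nbhd_def by blast
        then show ?thesis using True a(2) unfolding Q_def by blast
      next
        case False then have "a \<in> A1" using a(1) unfolding A1_def by blast
        then show ?thesis using a(2) unfolding P_def by blast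
      qed
    next
      fix z assume "z \<in> P A1 \<union> (\<Union>k\<in>K. Q k)"
      then consider a where "a \<in> A1" "z \<in> verts (Gs a)" | a where "a \<in> K" "z \<in> verts (Gs a)" "z \<noteq> x a 1"
        unfolding P_def Q_def by blast
      then show "z \<in> P A0 - N"
      proof cases
        case 1
        have aA0: "a \<in> A0" using 1(1) unfolding A1_def by blast
        have aI: "a \<in> {1..n}" and aj: "a \<noteq> j" using aA0 A0I unfolding A0_def by blast+
        have "z \<notin> N"
        proof (cases "z = x a 1")
          case True
          have "x a 1 \<notin> nbhd H v" using 1(1) aA0 unfolding A1_def K_def by blast
          moreover have "x a 1 \<noteq> v" using disjV[OF aI jI aj] x1V[OF aI] vGj unfolding Gj_def by blast
          ultimately show ?thesis using True unfolding N_def closed_nbhd_def by blast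
        next
          case False then show ?thesis using NV[OF aI jI aj 1(2) False] unfolding N_def v_def by blast
        qed
        then show ?thesis using 1(2) aA0 unfolding P_def by blast
      next
        case 2
        have aA0: "a \<in> A0" using 2(1) KA0 by blast
        have aI: "a \<in> {1..n}" and aj: "a \<noteq> j" using aA0 A0I unfolding A0_def by blast+
        have "z \<notin> N" using NV[OF aI jI aj 2(2,3)] unfolding N_def v_def by blast
        then show ?thesis using 2(2) aA0 unfolding P_def by blast
      qed
    qed
    have Ueq2: "U - N = P A1 \<union> J2"
    proof -
      have "U - N = (Gj - N) \<union> (P A0 - N) \<union> (J - N)" unfolding U_def PA by blast
      also have "J - N = J" using NJ by blast
      finally show ?thesis unfolding P0eq J2_def J0_def by blast
    qed
    have QH: "\<forall>k\<in>K. Q k \<subseteq> verts H" using Vsub KI unfolding Q_def by blast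
    have J0H: "J0 \<subseteq> verts H" using GjH JH unfolding J0_def by blast
    have vdJ0: "vertex_decomposable (ind H J0)"
      unfolding J0_def
    proof (rule vd_ind_union[OF wfH _ JH _ vdN vJ])
      show "Gj - N \<subseteq> verts H" using GjH by blast
      show "sep H (Gj - N) J" by (rule sep_mono[OF sPJ]) (use PA in blast)+
    qed
    have vQ: "\<forall>k\<in>K. vertex_decomposable (ind H (Q k))"
    proof
      fix k assume "k \<in> K"
      hence k: "k \<in> {1..n}" using KI by blast
      have "shedding_vertex (Gs k) (x k 1)" using sv k by blast
      hence "vertex_decomposable (del_verts (Gs k) {x k 1})" unfolding shedding_vertex_def by blast
      hence "vertex_decomposable (del_verts (ind H (verts (Gs k))) {x k 1})" using GsI[OF k] by metis
      then show "vertex_decomposable (ind H (Q k))" unfolding del_ind Q_def .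
    qed
    have sGQ: "sep H (Gj - {v}) (Q k)" if "k \<in> A0" for k
      by (rule sep_mono[OF sGP[of "{k}"]]) (use that in \<open>auto simp: P_def Q_def\<close>)
    have sJ0Q: "\<forall>k\<in>K. sep H J0 (Q k)"
    proof
      fix k assume k: "k \<in> K"
      show "sep H J0 (Q k)" unfolding J0_def
      proof (rule sep_Un)
        show "sep H (Gj - N) (Q k)" by (rule sep_mono[OF sGQ]) (use k KA0 vN in auto)
        show "sep H J (Q k)" by (rule sep_mono[OF sJ]) (use k KA0 PA in \<open>auto simp: P_def Q_def A0_def\<close>)
      qed
    qed
    have sQQ: "\<forall>k\<in>K. \<forall>k'\<in>K. k \<noteq> k' \<longrightarrow> sep H (Q k) (Q k')"
    proof (intro ballI impI)
      fix k k' assume k: "k \<in> K" and k': "k' \<in> K" and kk: "k \<noteq> k'"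
      show "sep H (Q k) (Q k')" unfolding Q_def
        by (rule sep_mono[OF sepP[OF _ _ kk]]) (use k k' KI in auto)
    qed
    have vdJ2: "vertex_decomposable (ind H J2)"
      unfolding J2_def by (rule vd_ind_family[OF finK wfH J0H QH vdJ0 vQ sJ0Q sQQ])
    have J2H: "J2 \<subseteq> verts H" using J0H QH unfolding J2_def by blast
    have sJ2: "sep H J2 (P A1)"
      unfolding J2_def J0_def
    proof (intro sep_Un)
      show "sep H (Gj - N) (P A1)" by (rule sep_mono[OF sGP[of A1]]) (use vN in \<open>auto simp: A1_def\<close>)
      show "sep H J (P A1)" by (rule sep_mono[OF sJ]) (auto simp: PA P_def A1_def A0_def)
      show "sep H (\<Union>k\<in>K. Q k) (P A1)"
      proof (rule sep_UN)
        fix k assume k: "k \<in> K"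
        show "sep H (Q k) (P A1)" unfolding P_def
        proof (rule sep_UN2)
          fix k' assume k': "k' \<in> A1"
          have "k \<noteq> k'" using k k' unfolding A1_def by blast
          moreover have "k \<in> {1..n}" "k' \<in> {1..n}" using k k' KI A1I by blast+
          ultimately show "sep H (Q k) (verts (Gs k'))" unfolding Q_def using sepP by blast
        qed
      qed
    qed
    have cardA1: "card A1 < card A"
    proof -
      have "card A1 \<le> card A0" unfolding A1_def using finA A0_def by (simp add: card_mono)
      then show ?thesis using cardA0 by simp
    qed
    have vd_b: "vertex_decomposable (ind H (U - N))"
      unfolding Ueq2 by (rule less.hyps[OF cardA1 A1I J2H sJ2 vdJ2])
    have D1: "del_verts (ind H U) (closed_nbhd (ind H U) v) = ind H (U - N)"
      unfolding del_ind cnbhd_ind[OF UH vU] N_def by (rule arg_cong[where f="ind H"]) blast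
    have D2: "del_verts (ind H U) {v} = ind H (U - {v})" by (rule del_ind)
    have sc: "shedding_cond (ind H U) v"
      unfolding shedding_cond_def
    proof (intro allI impI)
      fix S assume "independent (del_verts (ind H U) (closed_nbhd (ind H U) v)) S"
      hence S: "S \<subseteq> U - N" "\<forall>e\<in>edges H. \<not> e \<subseteq> S"
        unfolding D1 using indep_ind[of "U - N" H S] UH by auto
      have "independent (del_verts (ind H Gj) (closed_nbhd (ind H Gj) v)) (S \<inter> Gj)"
        unfolding DJ1 indep_ind[of "Gj - N" H, OF Diff_subset[THEN subset_trans, OF GjH]]
        using S by blast
      then obtain y where y: "y \<in> nbhd (ind H Gj) v"
        "independent (del_verts (ind H Gj) {v}) (insert y (S \<inter> Gj))"
        using scj unfolding shedding_cond_def by blast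
      have yN: "y \<in> nbhd H v" "y \<in> Gj" using y(1) unfolding nbhd_ind[OF GjH vGj] by blast+
      have y2: "insert y (S \<inter> Gj) \<subseteq> Gj - {v}" "\<forall>e\<in>edges H. \<not> e \<subseteq> insert y (S \<inter> Gj)"
        using y(2) unfolding DJ2 indep_ind[of "Gj - {v}" H, OF Diff_subset[THEN subset_trans, OF GjH]]
        by blast+
      have "independent (del_verts (ind H U) {v}) (insert y S)"
        unfolding D2 indep_ind[of "U - {v}" H, OF Diff_subset[THEN subset_trans, OF UH]]
      proof (intro conjI ballI)
        show "insert y S \<subseteq> U - {v}" using y2(1) S(1) vN PA unfolding U_def by blast
      next
        fix e assume e: "e \<in> edges H"
        show "\<not> e \<subseteq> insert y S"
        proof
          assume es: "e \<subseteq> insert y S"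
          show False
          proof (cases "y \<in> e")
            case True
            have "y \<noteq> x j 1" using y2(1) unfolding v_def by blast
            hence "e \<in> edges (Gs j)" using edge_in[OF jI _ _ e True] yN(2) unfolding Gj_def by blast
            hence "e \<subseteq> Gj" using Esub[OF jI] unfolding Gj_def by blast
            hence "e \<subseteq> insert y (S \<inter> Gj)" using es by blast
            then show False using y2(2) e by blast
          next
            case False
            hence "e \<subseteq> S" using es by blast
            then show False using S(2) e by blast
          qed
        qed
      qed
      moreover have "y \<in> nbhd (ind H U) v" unfolding nbhd_ind[OF UH vU]
        using yN PA unfolding U_def by blast
      ultimately show "\<exists>y\<in>nbhd (ind H U) v. independent (del_verts (ind H U) {v}) (insert y S)" by blast
    qed
    have "vertex_decomposable (ind H U)"
    proof (rule vertex_decomposable.shed[of v])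
      show "v \<in> verts (ind H U)" using vU verts_ind[OF UH] by simp
      show "vertex_decomposable (del_verts (ind H U) (closed_nbhd (ind H U) v))" unfolding D1 by (rule vd_b)
      show "vertex_decomposable (del_verts (ind H U) {v})" unfolding D2 by (rule vd_a)
    qed (rule sc)
    then show ?thesis unfolding U_def .
  qed
qed

end


context att begin

lemma part1:
  assumes sv: "\<forall>i\<in>{1..n}. shedding_vertex (Gs i) (x i 1)"
  shows "vertex_decomposable H"
proof -
  have s: "sep H {} (P {1..n})" unfolding sep_def by blast
  have "vertex_decomposable (ind H (P {1..n} \<union> {}))"
    by (rule part1_claim[OF sv _ _ s ind_empty_vd[OF wfH]]) auto
  moreover have "P {1..n} \<union> {} = verts H"
  proof -
    have "verts G \<subseteq> P {1..n}" unfolding G_verts P_def using x1V by blast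
    then show ?thesis unfolding VH P_def by blast
  qed
  ultimately show ?thesis using ind_full[OF wfH] by simp
qed

lemma part2:
  assumes vd: "vertex_decomposable H" and iI: "i \<in> {1..n}"
  shows "vertex_decomposable (Gs i)"
proof -
  have ex: "\<exists>y. y \<in> verts (Gs j) \<and> y \<noteq> x j 1 \<and> {x j 1, y} \<in> edges (Gs j)" if jI: "j \<in> {1..n}" for j
  proof -
    have mj: "m j \<ge> 2" using m_ge jI by blast
    hence m2: "2 \<in> {1..m j}" by simp
    have m1: "1 \<in> {1..m j}" using mj by simp
    have x2: "x j 2 \<in> verts (Gs j)" using Gi_verts jI m2 by blast
    have x12: "x j 1 \<noteq> x j 2" using Gi_verts_distinct jI m1 m2 unfolding inj_on_def by fastforce
    have "(adj (Gs j))\<^sup>*\<^sup>* (x j 1) (x j 2)" using Gi_conn jI x1V[OF jI] x2 unfolding connected_graph_def by blast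
    then show ?thesis
    proof (cases rule: converse_rtranclpE)
      case base then show ?thesis using x12 by simp
    next
      case (step y)
      hence e: "{x j 1, y} \<in> edges (Gs j)" unfolding adj_def by simp
      hence "y \<in> verts (Gs j)" using Esub[OF jI] by blast
      moreover have "y \<noteq> x j 1" using Ecard[OF jI e] by auto
      ultimately show ?thesis using e by blast
    qed
  qed
  obtain yf where yf: "\<And>j. j \<in> {1..n} \<Longrightarrow> yf j \<in> verts (Gs j) \<and> yf j \<noteq> x j 1 \<and> {x j 1, yf j} \<in> edges (Gs j)"
    using ex by metis
  define J where "J = {1..n} - {i}"
  define W1 where "W1 = (\<Union>j\<in>J. closed_nbhd H (yf j))"
  have Nsub: "closed_nbhd H (yf j) \<subseteq> verts (Gs j)" if jI: "j \<in> {1..n}" for j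
  proof
    fix z assume z: "z \<in> closed_nbhd H (yf j)"
    show "z \<in> verts (Gs j)"
    proof (cases "z = yf j")
      case True then show ?thesis using yf[OF jI] by simp
    next
      case False
      hence "{yf j, z} \<in> edges H" using z unfolding closed_nbhd_def nbhd_def by blast
      hence "{yf j, z} \<in> edges (Gs j)" using edge_in[OF jI, of "yf j"] yf[OF jI] by blast
      then show ?thesis using Esub[OF jI] by blast
    qed
  qed
  have xin: "x j 1 \<in> closed_nbhd H (yf j)" if jI: "j \<in> {1..n}" for j
  proof -
    have "{yf j, x j 1} \<in> edges H" using yf[OF jI] EsubH[OF jI] by (auto simp: insert_commute)
    moreover have "x j 1 \<in> verts H" using x1V[OF jI] Vsub[OF jI] by blast
    ultimately show ?thesis unfolding closed_nbhd_def nbhd_def by blast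
  qed
  have JI: "J \<subseteq> {1..n}" unfolding J_def by blast
  have vd1: "vertex_decomposable (del_verts H W1)"
    unfolding W1_def
  proof (rule phase1)
    show "finite J" using JI finite_subset by blast
    show "\<forall>j\<in>J. yf j \<in> verts H" using yf Vsub JI by blast
    show "\<forall>j\<in>J. \<forall>k\<in>J. j \<noteq> k \<longrightarrow> yf j \<notin> closed_nbhd H (yf k)"
    proof (intro ballI impI)
      fix j k assume j: "j \<in> J" and k: "k \<in> J" and jk: "j \<noteq> k"
      have jI: "j \<in> {1..n}" and kI: "k \<in> {1..n}" using j k JI by blast+
      show "yf j \<notin> closed_nbhd H (yf k)"
        using Nsub[OF kI] yf[OF jI] disjV[OF jI kI jk] by blast
    qed
  qed (rule wfH, rule vd)
  define L where "L = del_verts H W1"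
  define R where "R = verts L - verts (Gs i)"
  have W1Vi: "W1 \<inter> verts (Gs i) = {}"
  proof (rule ccontr)
    assume "W1 \<inter> verts (Gs i) \<noteq> {}"
    then obtain z j where z: "j \<in> J" "z \<in> closed_nbhd H (yf j)" "z \<in> verts (Gs i)" unfolding W1_def by blast
    have jI: "j \<in> {1..n}" "j \<noteq> i" using z(1) unfolding J_def by blast+
    show False using Nsub[OF jI(1)] z disjV[OF jI(1) iI jI(2)] by blast
  qed
  have closure: "\<forall>r\<in>R. nbhd L r \<subseteq> R"
  proof (intro ballI subsetI)
    fix r z assume r: "r \<in> R" and z: "z \<in> nbhd L r"
    have rL: "r \<in> verts H - W1" using r unfolding R_def L_def by simp
    have zN: "z \<in> nbhd H r - W1" using z unfolding L_def nbhd_del[OF rL] .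
    have rVi: "r \<notin> verts (Gs i)" using r unfolding R_def by blast
    have e: "{r, z} \<in> edges H" using zN unfolding nbhd_def by blast
    have "z \<notin> verts (Gs i)"
    proof
      assume zi: "z \<in> verts (Gs i)"
      show False
      proof (cases "z = x i 1")
        case False
        hence "{r, z} \<in> edges (Gs i)" using edge_in[OF iI zi False e] by simp
        then show False using Esub[OF iI] rVi by blast
      next
        case True
        from e consider "{r, z} \<in> edges G" | k where "k\<in>{1..n}" "{r, z} \<in> edges (Gs k)" unfolding EH by blast
        then show False
        proof cases
          case 1
          hence "r \<in> verts G" using G_simple unfolding simple_graph_def by blast
          then obtain k where k: "k \<in> {1..n}" "r = x k 1" unfolding G_verts by blast
          have "k \<noteq> i" using k rVi x1V[OF iI] by blast
          hence "k \<in> J" using k(1) unfolding J_def by blast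
          hence "r \<in> W1" using xin[OF k(1)] k(2) unfolding W1_def by blast
          then show False using rL by blast
        next
          case 2
          hence rk: "r \<in> verts (Gs k)" "z \<in> verts (Gs k)" using Esub[OF 2(1)] by blast+
          show False
          proof (cases "k = i")
            case True then show False using rk rVi by simp
          next
            case False then show False using disjV[OF iI 2(1)] zi rk by metis
          qed
        qed
      qed
    qed
    moreover have "z \<in> verts L" using zN nbhd_sub[of H r] unfolding L_def by auto
    ultimately show "z \<in> R" unfolding R_def by blast
  qed
  have vd2: "vertex_decomposable (del_verts L R)"
  proof (rule phase2)
    show "finite R" unfolding R_def L_def using finH by simp
    show "wfg L" unfolding L_def by (rule wfg_del[OF wfH])
    show "vertex_decomposable L" unfolding L_def by (rule vd1)
    show "R \<subseteq> verts L" unfolding R_def by blast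
  qed (rule closure)
  have "del_verts L R = ind H (verts (Gs i))"
    unfolding L_def del_del ind_def
  proof (rule del_cong)
    show "verts H - (W1 \<union> R) = verts H - (verts H - verts (Gs i))"
      using W1Vi Vsub[OF iI] unfolding R_def L_def by auto
  qed
  then show ?thesis using vd2 GsI[OF iI] by simp
qed

end

theorem proposition2p3:
  fixes G :: "'a graph" and Gs :: "nat \<Rightarrow> 'a graph"
    and n :: nat and m :: "nat \<Rightarrow> nat" and x :: "nat \<Rightarrow> nat \<Rightarrow> 'a"
  assumes G_simple: "simple_graph G"
    and G_verts: "verts G = (\<lambda>i. x i 1) ` {1..n}"
    and G_verts_distinct: "inj_on (\<lambda>i. x i 1) {1..n}"
    and m_ge: "\<forall>i\<in>{1..n}. m i \<ge> 2"
    and Gi_simple: "\<forall>i\<in>{1..n}. simple_graph (Gs i)"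
    and Gi_conn: "\<forall>i\<in>{1..n}. connected_graph (Gs i)"
    and Gi_verts: "\<forall>i\<in>{1..n}. verts (Gs i) = x i ` {1..m i}"
    and Gi_verts_distinct: "\<forall>i\<in>{1..n}. inj_on (x i) {1..m i}"
    and Gi_disj: "\<forall>i\<in>{1..n}. \<forall>j\<in>{1..n}. i \<noteq> j \<longrightarrow>
                    (verts (Gs i) - {x i 1}) \<inter> (verts (Gs j) - {x j 1}) = {}"
    and Gi_disj_G: "\<forall>i\<in>{1..n}. (verts (Gs i) - {x i 1}) \<inter> verts G = {}"
  shows "((\<forall>i\<in>{1..n}. vertex_decomposable (Gs i) \<and> shedding_vertex (Gs i) (x i 1))
            \<longrightarrow> vertex_decomposable (attach G n Gs))
       \<and> (vertex_decomposable (attach G n Gs)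
            \<longrightarrow> (\<forall>i\<in>{1..n}. vertex_decomposable (Gs i)))"
proof -
  interpret att G Gs n m x using assms by unfold_locales
  show ?thesis using part1 part2 by blast
qed

end
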